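(* Let $n \ge 2$ be even. Then for every $N$ with $1 \le N \le \frac{3n}{2}$, there exists a finite sequence of $n$-crossing permutations over $S_{3n/2}$ whose product sends $1$ to $N$.
   Context: For integers $2\le n\le m$ and $1 \le j \le m-n+1$, the $n$-crossing permutation $\pi_j\in S_m$ is $\pi_j=(j,\,j+n-1)(j+1,\,j+n-2)\cdots$, i.e. the involution sending $i \mapsto 2j+n-1-i$ for $j\le i\le j+n-1$ and fixing all other elements of $\{1,\dots,m\}$. The $n$-crossing permutations over $S_m$ are $\pi_1,\dots,\pi_{m-n+1}$. *)

theory Defs
  imports Main
begin

text \<open>The n-crossing permutation pi_j over S_m, as a function on nat:
  i maps to 2j+n-1-i for j <= i <= j+n-1, every other point is fixed
  (points outside {1..m} are fixed too, since j+n-1 <= m).\<close>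
definition crossing_perm :: "nat \<Rightarrow> nat \<Rightarrow> nat \<Rightarrow> nat" where
  "crossing_perm n j i = (if j \<le> i \<and> i \<le> j + n - 1 then 2 * j + n - 1 - i else i)"

definition crossing_perms :: "nat \<Rightarrow> nat \<Rightarrow> (nat \<Rightarrow> nat) set" where
  "crossing_perms n m = {crossing_perm n j | j. 1 \<le> j \<and> j \<le> m - n + 1}"

end

theory Submission
  imports Defs
begin

definition reachk :: "nat \<Rightarrow> nat \<Rightarrow> bool" where
  "reachk k x = (\<exists>ps. set ps \<subseteq> crossing_perms (2*k) (3*k) \<and> foldr (\<circ>) ps id 1 = x)"

lemma reach1: "reachk k 1"
  unfolding reachk_def by (rule exI[of _ "[]"]) simp

lemma reach_cons:
  assumes "reachk k x" "p \<in> crossing_perms (2*k) (3*k)"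
  shows "reachk k (p x)"
proof -
  obtain ps where ps: "set ps \<subseteq> crossing_perms (2*k) (3*k)" "foldr (\<circ>) ps id 1 = x"
    using assms(1) unfolding reachk_def by blast
  show ?thesis unfolding reachk_def
    apply (rule exI[of _ "p # ps"])
    using ps assms(2) by simp
qed

lemma cp_mem:
  assumes "1 \<le> j" "j \<le> k + 1" "1 \<le> k"
  shows "crossing_perm (2*k) j \<in> crossing_perms (2*k) (3*k)"
  unfolding crossing_perms_def using assms by auto

lemma plus2:
  assumes k: "1 \<le> k" and x: "1 \<le> x" "x + 2 \<le> 3*k"
    and r: "reachk k x"
  shows "reachk k (x + 2)"
proof -
  define j where "j = (if x + 2 \<le> 2*k then 1 else x + 2 - 2*k)"
  have j1: "1 \<le> j" "j \<le> k" using x k unfolding j_def by auto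
  have e: "crossing_perm (2*k) (j+1) (crossing_perm (2*k) j x) = x + 2"
    using x k j1 unfolding crossing_perm_def j_def by (auto split: if_splits)
  have m1: "crossing_perm (2*k) j \<in> crossing_perms (2*k) (3*k)"
    using cp_mem j1 k by simp
  have m2: "crossing_perm (2*k) (j+1) \<in> crossing_perms (2*k) (3*k)"
    using cp_mem j1 k by simp
  show ?thesis
    using reach_cons[OF reach_cons[OF r m1] m2] e by simp
qed

lemma odds:
  assumes k: "1 \<le> k"
  shows "2*i+1 \<le> 3*k \<Longrightarrow> reachk k (2*i+1)"
proof (induction i)
  case 0
  show ?case using reach1 by simp
next
  case (Suc i)
  have IH: "reachk k (2*i+1)"
    by (rule Suc.IH) (use Suc.prems in simp)
  have "reachk k (2*i+1 + 2)"
    using plus2[OF k _ _ IH] Suc by simp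
  then show ?case by simp
qed

lemma evens:
  assumes k: "1 \<le> k"
  shows "2*i+2 \<le> 3*k \<Longrightarrow> reachk k (2*i+2)"
proof (induction i)
  case 0
  have "2*(k-1)+1 \<le> 3*k" using k by simp
  have r: "reachk k (2*(k-1)+1)" using odds[OF k, of "k-1"] k by simp
  have m: "crossing_perm (2*k) 1 \<in> crossing_perms (2*k) (3*k)" using cp_mem k by simp
  have e: "crossing_perm (2*k) 1 (2*(k-1)+1) = 2" using k unfolding crossing_perm_def by auto
  show ?case using reach_cons[OF r m] e by (simp add: numeral_2_eq_2)
next
  case (Suc i)
  have IH: "reachk k (2*i+2)"
    by (rule Suc.IH) (use Suc.prems in simp)
  have "reachk k (2*i+2 + 2)"
    using plus2[OF k _ _ IH] Suc by simp
  then show ?case by simp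
qed

theorem lemma2p3:
  fixes n N :: nat
  assumes "even n" and "n \<ge> 2"
    and "1 \<le> N" and "N \<le> 3 * n div 2"
  shows "\<exists>ps. set ps \<subseteq> crossing_perms n (3 * n div 2) \<and> foldr (\<circ>) ps id 1 = N"
proof -
  obtain k where n: "n = 2*k" using assms(1) by blast
  have k: "1 \<le> k" using assms(2) n by simp
  have m: "3 * n div 2 = 3*k" using n by simp
  have "reachk k N"
  proof (cases "even N")
    case True
    then obtain j where j: "N = 2*j" by (rule evenE)
    then have "N = 2*(j-1)+2" using assms(3) by simp
    then obtain i where "N = 2*i+2" by blast
    then show ?thesis using evens[OF k, of i] assms(4) n m by auto
  next
    case False
    then obtain i where "N = 2*i+1" using oddE by blast
    then show ?thesis using odds[OF k, of i] assms(4) n m by auto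
  qed
  then show ?thesis unfolding reachk_def n m by simp
qed

end
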